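(* Let $g,d:\mathbb{N}\to\mathbb{N}$ be two functions such that $g\in n+o(n)$ and $d\in o(n)$. Define $f:\mathbb{N}\to\mathbb{N}$ by $f(n)=\max_{n=n_1+\dots+n_{d(n)}}\sum_{i=1}^{d(n)}g(n_i)$, where the maximum ranges over all ways of writing $n$ as a sum of $d(n)$ natural numbers $n_1,\dots,n_{d(n)}$. Then $f\in n+o(n)$. *)

theory Defs
  imports Complex_Main "HOL-Library.Landau_Symbols"
begin

definition decomps :: "nat \<Rightarrow> nat \<Rightarrow> nat list set" where
  "decomps k n = {xs. length xs = k \<and> sum_list xs = n}"

definition max_split :: "(nat \<Rightarrow> nat) \<Rightarrow> (nat \<Rightarrow> nat) \<Rightarrow> nat \<Rightarrow> nat" where
  "max_split g d n = Max ((\<lambda>xs. sum_list (map g xs)) ` decomps (d n) n)"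

end

theory Submission
  imports Defs
begin

lemma decomps_finite: "finite (decomps k n)"
proof -
  have "decomps k n \<subseteq> {xs. set xs \<subseteq> {..n} \<and> length xs = k}"
    unfolding decomps_def using member_le_sum_list by fastforce
  then show ?thesis using finite_lists_length_eq[of "{..n}" k] finite_subset by blast
qed

lemma sum_list_bound:
  fixes g :: "nat \<Rightarrow> nat" and e C :: real
  assumes "\<And>m. real (g m) \<le> (1+e) * real m + C"
  shows "real (sum_list (map g xs)) \<le> (1+e) * real (sum_list xs) + real (length xs) * C"
  proof (induction xs)
  case (Cons a xs)
  have "real (g a) \<le> (1+e) * real a + C" using assms by blast
  with Cons show ?case by (simp add: algebra_simps)
qed simp

theorem lemma5p5:
  fixes g d :: "nat \<Rightarrow> nat"
  assumes g_asym: "(\<lambda>n. real (g n) - real n) \<in> o(\<lambda>n. real n)"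
    and d_asym: "(\<lambda>n. real (d n)) \<in> o(\<lambda>n. real n)"
    and d_pos: "\<And>n. n > 0 \<Longrightarrow> d n > 0"
  shows "(\<lambda>n. real (max_split g d n) - real n) \<in> o(\<lambda>n. real n)"
proof (rule landau_o.smallI)
  fix c :: real assume c: "c > 0"
  define e where "e = c/2"
  have e: "e > 0" using c by (simp add: e_def)
  from landau_o.smallD[OF g_asym e] obtain N where
    N: "\<And>n. n \<ge> N \<Longrightarrow> \<bar>real (g n) - real n\<bar> \<le> e * real n"
    by (auto simp: eventually_at_top_linorder)
  define C where "C = (\<Sum>m<N. g m)"
  have gb: "real (g m) \<le> (1+e) * real m + real C" for m
  proof (cases "m < N")
    case True
    then have "g m \<le> C" unfolding C_def
      by (intro member_le_sum) auto
    moreover have "0 \<le> e * real m" using e by simp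
    ultimately show ?thesis by (simp add: algebra_simps)
  next
    case False
    then have "\<bar>real (g m) - real m\<bar> \<le> e * real m" using N by simp
    then show ?thesis by (simp add: algebra_simps)
  qed
  have e2: "e / (real C + 1) > 0" using e by simp
  from landau_o.smallD[OF d_asym e2] obtain N2 where
    N2: "\<And>n. n \<ge> N2 \<Longrightarrow> real (d n) \<le> e / (real C + 1) * real n"
    by (auto simp: eventually_at_top_linorder)
  show "\<forall>\<^sub>F n in at_top. norm (real (max_split g d n) - real n) \<le> c * norm (real n)"
    unfolding eventually_at_top_linorder
  proof (intro exI[of _ "max 1 (max N N2)"] allI impI)
    fix n assume n: "n \<ge> max 1 (max N N2)"
    have dC: "real (d n) * real C \<le> e * real n"
    proof -
      have "real (d n) * real C \<le> real (d n) * (real C + 1)" by (intro mult_left_mono) auto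
      also have "\<dots> \<le> e / (real C + 1) * real n * (real C + 1)"
        using N2[of n] n by (intro mult_right_mono) auto
      also have "\<dots> = e * real n" by simp
      finally show ?thesis .
    qed
    have gn: "\<bar>real (g n) - real n\<bar> \<le> e * real n" using N n by simp
    have dp: "d n > 0" using d_pos n by simp
    let ?S = "(\<lambda>xs. sum_list (map g xs)) ` decomps (d n) n"
    have mem: "n # replicate (d n - 1) 0 \<in> decomps (d n) n"
      using dp unfolding decomps_def by auto
    have fin: "finite ?S" using decomps_finite by simp
    have "sum_list (map g (n # replicate (d n - 1) 0)) \<le> max_split g d n"
      unfolding max_split_def using fin imageI[OF mem, of "\<lambda>xs. sum_list (map g xs)"] by (rule Max_ge)
    then have lo: "g n \<le> max_split g d n" by simp
    have "max_split g d n \<in> ?S" unfolding max_split_def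
      using fin mem by (intro Max_in) auto
    then obtain xs where xs: "xs \<in> decomps (d n) n"
      and eq: "max_split g d n = sum_list (map g xs)" by auto
    have "real (max_split g d n) \<le> (1+e) * real n + real (d n) * real C"
      using sum_list_bound[of g e "real C" xs, OF gb] xs eq unfolding decomps_def by simp
    with dC have hi: "real (max_split g d n) \<le> (1+2*e) * real n" by (simp add: algebra_simps)
    have "real (g n) \<le> real (max_split g d n)" using lo by simp
    moreover have "real n - e * real n \<le> real (g n)" using gn by linarith
    moreover have "0 \<le> e * real n" using e by simp
    ultimately have "\<bar>real (max_split g d n) - real n\<bar> \<le> 2 * e * real n"
      using hi by (simp add: abs_le_iff algebra_simps)
    then show "norm (real (max_split g d n) - real n) \<le> c * norm (real n)"
      unfolding e_def by simp
  qed
qed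

end
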